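(* Let $\vec r:\mathbb{Z}\to\mathbb{R}^2$ be a nondegenerate convex hexagon with parallel and equi-length opposite sides (closed with period $6$, simple, convex, $\vec t_{k+3}=-\vec t_k$ for all $k$). Then the iterates $\mathcal{P}(\vec r)$, $\mathcal{P}(\mathcal{P}(\vec r))$, $\mathcal{Q}(\vec r)$, $\mathcal{Q}(\mathcal{Q}(\vec r))$ are well defined and are again nondegenerate convex hexagons with parallel and equi-length opposite sides, and $\vec r$ is periodically stable under both maps: there exist integers $s,s'$ such that for all $n$ the centroaffine curvatures satisfy $\kappa_n(\mathcal{P}(\mathcal{P}(\vec r)))=\kappa_{n+s}(\vec r)$, $\bar\kappa_n(\mathcal{P}(\mathcal{P}(\vec r)))=\bar\kappa_{n+s}(\vec r)$, and $\kappa_n(\mathcal{Q}(\mathcal{Q}(\vec r)))=\kappa_{n+s'}(\vec r)$, $\bar\kappa_n(\mathcal{Q}(\mathcal{Q}(\vec r)))=\bar\kappa_{n+s'}(\vec r)$.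
   Context: A discrete planar curve is a map $\vec r:\mathbb{Z}\to\mathbb{R}^2$; $\vec r_k=\vec r(k)$, $\vec t_k=\vec r_{k+1}-\vec r_k$, $[\vec a,\vec b]$ the $2\times2$ determinant. Nondegenerate: $[\vec t_{k-1},\vec t_k]\ne0$ for all $k$. First and second centroaffine curvatures: $\kappa_k=\frac{[\vec t_k,\vec t_{k+1}]}{[\vec t_{k-1},\vec t_k]}$, $\bar\kappa_k=\frac{[\vec t_{k-1},\vec t_{k+1}]}{[\vec t_{k-1},\vec t_k]}$. Closed with period $q$: $\vec r(k+q)=\vec r(k)$ for all $k$, $q$ minimal; simple: the piecewise-linear interpolation is injective on $[k,k+q)$; convex: for each line through $\vec r_k,\vec r_{k+1}$, all vertices lie in one closed half-plane bounded by it. The pentagram image is $\mathcal{P}(\vec r)_k=$ the intersection point of the line through $\vec r_{k-1},\vec r_{k+1}$ with the line through $\vec r_k,\vec r_{k+2}$; the inverse pentagram image is $\mathcal{Q}(\vec r)_k=$ the intersection point of the line through $\vec r_{k-1},\vec r_k$ with the line through $\vec r_{k+1},\vec r_{k+2}$. *)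

theory Defs
  imports "HOL-Analysis.Analysis"
begin

type_synonym dcurve = "int \<Rightarrow> real \<times> real"

definition det2 :: "real \<times> real \<Rightarrow> real \<times> real \<Rightarrow> real" where
  "det2 a b = fst a * snd b - snd a * fst b"

definition tang :: "dcurve \<Rightarrow> int \<Rightarrow> real \<times> real" where
  "tang r k = r (k + 1) - r k"

definition nondegenerate :: "dcurve \<Rightarrow> bool" where
  "nondegenerate r \<longleftrightarrow> (\<forall>k. det2 (tang r (k - 1)) (tang r k) \<noteq> 0)"

definition kappa :: "dcurve \<Rightarrow> int \<Rightarrow> real" where
  "kappa r k = det2 (tang r k) (tang r (k + 1)) / det2 (tang r (k - 1)) (tang r k)"

definition kappabar :: "dcurve \<Rightarrow> int \<Rightarrow> real" where
  "kappabar r k = det2 (tang r (k - 1)) (tang r (k + 1)) / det2 (tang r (k - 1)) (tang r k)"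

definition closed_period :: "dcurve \<Rightarrow> int \<Rightarrow> bool" where
  "closed_period r q \<longleftrightarrow> q > 0 \<and> (\<forall>k. r (k + q) = r k) \<and>
     (\<forall>p. 0 < p \<and> p < q \<longrightarrow> \<not> (\<forall>k. r (k + p) = r k))"

definition pl_interp :: "dcurve \<Rightarrow> real \<Rightarrow> real \<times> real" where
  "pl_interp r t = r \<lfloor>t\<rfloor> + (t - of_int \<lfloor>t\<rfloor>) *\<^sub>R (r (\<lfloor>t\<rfloor> + 1) - r \<lfloor>t\<rfloor>)"

definition simple_curve :: "dcurve \<Rightarrow> int \<Rightarrow> bool" where
  "simple_curve r q \<longleftrightarrow> (\<forall>k::int. inj_on (pl_interp r) {real_of_int k ..< real_of_int k + real_of_int q})"

definition convex_curve :: "dcurve \<Rightarrow> bool" where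
  "convex_curve r \<longleftrightarrow> (\<forall>k. (\<forall>j. det2 (tang r k) (r j - r k) \<ge> 0) \<or> (\<forall>j. det2 (tang r k) (r j - r k) \<le> 0))"

text \<open>Line through a and b (a proper line when a \<noteq> b).\<close>
definition line_through :: "real \<times> real \<Rightarrow> real \<times> real \<Rightarrow> (real \<times> real) set" where
  "line_through a b = {p. det2 (b - a) (p - a) = 0}"

definition isect_wd :: "real \<times> real \<Rightarrow> real \<times> real \<Rightarrow> real \<times> real \<Rightarrow> real \<times> real \<Rightarrow> bool" where
  "isect_wd a b c d \<longleftrightarrow> a \<noteq> b \<and> c \<noteq> d \<and> (\<exists>!p. p \<in> line_through a b \<and> p \<in> line_through c d)"

definition isect :: "real \<times> real \<Rightarrow> real \<times> real \<Rightarrow> real \<times> real \<Rightarrow> real \<times> real \<Rightarrow> real \<times> real" where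
  "isect a b c d = (THE p. p \<in> line_through a b \<and> p \<in> line_through c d)"

definition pent :: "dcurve \<Rightarrow> dcurve" where
  "pent r k = isect (r (k - 1)) (r (k + 1)) (r k) (r (k + 2))"

definition pent_wd :: "dcurve \<Rightarrow> bool" where
  "pent_wd r \<longleftrightarrow> (\<forall>k. isect_wd (r (k - 1)) (r (k + 1)) (r k) (r (k + 2)))"

definition invpent :: "dcurve \<Rightarrow> dcurve" where
  "invpent r k = isect (r (k - 1)) (r k) (r (k + 1)) (r (k + 2))"

definition invpent_wd :: "dcurve \<Rightarrow> bool" where
  "invpent_wd r \<longleftrightarrow> (\<forall>k. isect_wd (r (k - 1)) (r k) (r (k + 1)) (r (k + 2)))"

definition par_hexagon :: "dcurve \<Rightarrow> bool" where
  "par_hexagon r \<longleftrightarrow> nondegenerate r \<and> closed_period r 6 \<and> simple_curve r 6 \<and>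
     convex_curve r \<and> (\<forall>k. tang r (k + 3) = - tang r k)"

end

theory Submission
  imports Defs
begin


lemma det2_comp: "det2 (a1,a2) (b1,b2) = a1*b2 - a2*b1" by (simp add: det2_def)
lemma det2_add1: "det2 (a + b) c = det2 a c + det2 b c" by (simp add: det2_def algebra_simps)
lemma det2_add2: "det2 c (a + b) = det2 c a + det2 c b" by (simp add: det2_def algebra_simps)
lemma det2_diff1: "det2 (a - b) c = det2 a c - det2 b c" by (simp add: det2_def algebra_simps)
lemma det2_diff2: "det2 c (a - b) = det2 c a - det2 c b" by (simp add: det2_def algebra_simps)
lemma det2_scale1: "det2 (t *\<^sub>R a) c = t * det2 a c" by (simp add: det2_def algebra_simps)
lemma det2_scale2: "det2 c (t *\<^sub>R a) = t * det2 c a" by (simp add: det2_def algebra_simps)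
lemma det2_neg1: "det2 (- a) c = - det2 a c" by (simp add: det2_def algebra_simps)
lemma det2_neg2: "det2 c (- a) = - det2 c a" by (simp add: det2_def algebra_simps)
lemma det2_self: "det2 a a = 0" by (simp add: det2_def algebra_simps)
lemma det2_swap: "det2 b a = - det2 a b" by (simp add: det2_def algebra_simps)
lemma det2_zero1: "det2 0 a = 0" and det2_zero2: "det2 a 0 = 0" by (simp_all add: det2_def)
lemmas det2_lin = det2_add1 det2_add2 det2_diff1 det2_diff2 det2_scale1 det2_scale2 det2_neg1 det2_neg2 det2_self det2_zero1 det2_zero2

lemma isect_formula:
  fixes p1 p2 p3 p4 :: "real \<times> real"
  assumes D: "det2 (p2 - p1) (p4 - p3) \<noteq> 0"
  shows "isect_wd p1 p2 p3 p4 \<and>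
    isect p1 p2 p3 p4 = p1 + (det2 (p3 - p1) (p4 - p3) / det2 (p2 - p1) (p4 - p3)) *\<^sub>R (p2 - p1)"
proof -
  define q where "q = p1 + (det2 (p3 - p1) (p4 - p3) / det2 (p2 - p1) (p4 - p3)) *\<^sub>R (p2 - p1)"
  have ne1: "p1 \<noteq> p2" using D by (auto simp: det2_def)
  have ne2: "p3 \<noteq> p4" using D by (auto simp: det2_def)
  have q1: "q \<in> line_through p1 p2"
    unfolding line_through_def q_def by (simp add: det2_def algebra_simps)
  have q2: "q \<in> line_through p3 p4"
  proof -
    define u where "u = p2 - p1"
    define w where "w = p4 - p3"
    define e where "e = p1 - p3"
    have qe: "q - p3 = e + (det2 (- e) w / det2 u w) *\<^sub>R u"
      unfolding q_def u_def w_def e_def by (simp add: algebra_simps)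
    have "det2 (p4 - p3) (q - p3) = det2 w e + (det2 (- e) w / det2 u w) * det2 w u"
      unfolding qe w_def[symmetric] by (simp add: det2_add2 det2_scale2)
    also have "\<dots> = 0" using D unfolding u_def[symmetric] w_def[symmetric]
      by (simp add: det2_swap[of u w] det2_neg1 det2_swap[of e w])
    finally show ?thesis by (simp add: line_through_def)
  qed
  have uniq: "x = q" if "x \<in> line_through p1 p2" "x \<in> line_through p3 p4" for x
  proof -
    obtain u1 u2 where u: "p2 - p1 = (u1,u2)" by (cases "p2-p1")
    obtain w1 w2 where w: "p4 - p3 = (w1,w2)" by (cases "p4-p3")
    obtain g1 g2 where v: "x - q = (g1,g2)" by (cases "x-q")
    have e1: "det2 (p2 - p1) (x - q) = 0"
    proof -
      have "det2 (p2 - p1) (x - p1) = 0" "det2 (p2 - p1) (q - p1) = 0"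
        using that(1) q1 by (auto simp: line_through_def)
      then show ?thesis by (simp add: det2_def algebra_simps)
    qed
    have e2: "det2 (p4 - p3) (x - q) = 0"
    proof -
      have "det2 (p4 - p3) (x - p3) = 0" "det2 (p4 - p3) (q - p3) = 0"
        using that(2) q2 by (auto simp: line_through_def)
      then show ?thesis by (simp add: det2_def algebra_simps)
    qed
    have a: "u1*g2 - u2*g1 = 0" "w1*g2 - w2*g1 = 0" "u1*w2 - u2*w1 \<noteq> 0"
      using e1 e2 D u v w by (auto simp: det2_comp)
    have "g1 * (u1*w2 - u2*w1) = 0"
    proof -
      have "g1 * (u1*w2 - u2*w1) = u1*(w2*g1) - w1*(u2*g1)" by (simp add: algebra_simps)
      also have "\<dots> = u1*(w1*g2) - w1*(u1*g2)" using a by (simp add: algebra_simps)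
      finally show ?thesis by simp
    qed
    hence "g1 = 0" using a by simp
    have "g2 * (u1*w2 - u2*w1) = 0"
    proof -
      have "g2 * (u1*w2 - u2*w1) = w2*(u1*g2) - u2*(w1*g2)" by (simp add: algebra_simps)
      also have "\<dots> = w2*(u2*g1) - u2*(w2*g1)" using a by (simp add: algebra_simps)
      finally show ?thesis by simp
    qed
    hence "g2 = 0" using a by simp
    with \<open>g1 = 0\<close> v show ?thesis by (metis eq_iff_diff_eq_0 zero_prod_def)
  qed
  have ex: "\<exists>!x. x \<in> line_through p1 p2 \<and> x \<in> line_through p3 p4"
  proof (rule ex1I[of _ q])
    show "q \<in> line_through p1 p2 \<and> q \<in> line_through p3 p4" using q1 q2 by (rule conjI)
  next
    fix x assume "x \<in> line_through p1 p2 \<and> x \<in> line_through p3 p4"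
    then show "x = q" using uniq by (elim conjE)
  qed
  have "isect p1 p2 p3 p4 = q" unfolding isect_def
  proof (rule the_equality)
    show "q \<in> line_through p1 p2 \<and> q \<in> line_through p3 p4" using q1 q2 by (rule conjI)
  next
    fix x assume "x \<in> line_through p1 p2 \<and> x \<in> line_through p3 p4"
    then show "x = q" using uniq by (elim conjE)
  qed
  then show ?thesis using ex ne1 ne2 unfolding isect_wd_def q_def by blast
qed

lemma isect_eq: "det2 (p2 - p1) (p4 - p3) \<noteq> 0 \<Longrightarrow>
    isect p1 p2 p3 p4 = p1 + (det2 (p3 - p1) (p4 - p3) / det2 (p2 - p1) (p4 - p3)) *\<^sub>R (p2 - p1)"
  using isect_formula by blast

lemma alg_P:
  fixes p a b c :: "real \<times> real"
  defines "x \<equiv> det2 a b" and "y \<equiv> det2 b c" and "z \<equiv> det2 a c"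
  assumes S: "x + y + z \<noteq> 0"
  shows "det2 (isect p (p+b+c) (p+b) (p+b+c-a) - isect (p-a) (p+b) p (p+b+c))
               (isect (p+b) (p+b+c-a) (p+b+c) (p+c-a) - isect p (p+b+c) (p+b) (p+b+c-a))
         = y * z / (x + y + z)"
proof -
  have sw: "det2 b a = - x" "det2 c a = - z" "det2 c b = - y"
    unfolding x_def y_def z_def by (simp_all add: det2_swap[of b a] det2_swap[of c a] det2_swap[of c b])
  note ds = det2_lin sw x_def[symmetric] y_def[symmetric] z_def[symmetric]
  have d0: "det2 ((p+b) - (p-a)) ((p+b+c) - p) = x + y + z"
    by (simp add: ds algebra_simps)
  have n0: "det2 (p - (p-a)) ((p+b+c) - p) = x + z"
    by (simp add: ds algebra_simps)
  have d1: "det2 ((p+b+c) - p) ((p+b+c-a) - (p+b)) = x + y + z"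
    by (simp add: ds algebra_simps)
  have n1: "det2 ((p+b) - p) ((p+b+c-a) - (p+b)) = x + y"
    by (simp add: ds algebra_simps)
  have d2: "det2 ((p+b+c-a) - (p+b)) ((p+c-a) - (p+b+c)) = x + y + z"
    by (simp add: ds algebra_simps)
  have n2: "det2 ((p+b+c) - (p+b)) ((p+c-a) - (p+b+c)) = y + z"
    by (simp add: ds algebra_simps)
  define S where "S = x + y + z"
  have P0: "isect (p-a) (p+b) p (p+b+c) = (p - a) + ((x+z)/S) *\<^sub>R (a + b)"
    using isect_eq[of "p+b" "p-a" "p+b+c" p] d0 n0 S unfolding S_def by (simp add: algebra_simps)
  have P1: "isect p (p+b+c) (p+b) (p+b+c-a) = p + ((x+y)/S) *\<^sub>R (b + c)"
    using isect_eq[of "p+b+c" p "p+b+c-a" "p+b"] d1 n1 S unfolding S_def by (simp add: algebra_simps)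
  have P2: "isect (p+b) (p+b+c-a) (p+b+c) (p+c-a) = (p + b) + ((y+z)/S) *\<^sub>R (c - a)"
    using isect_eq[of "p+b+c-a" "p+b" "p+c-a" "p+b+c"] d2 n2 S unfolding S_def by (simp add: algebra_simps)
  have T0: "isect p (p+b+c) (p+b) (p+b+c-a) - isect (p-a) (p+b) p (p+b+c)
      = (1 - (x+z)/S) *\<^sub>R a + ((x+y)/S - (x+z)/S) *\<^sub>R b + ((x+y)/S) *\<^sub>R c"
    unfolding P0 P1 by (simp add: algebra_simps)
  have T1: "isect (p+b) (p+b+c-a) (p+b+c) (p+c-a) - isect p (p+b+c) (p+b) (p+b+c-a)
      = - (((y+z)/S) *\<^sub>R a) + (1 - (x+y)/S) *\<^sub>R b + ((y+z)/S - (x+y)/S) *\<^sub>R c"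
    unfolding P1 P2 by (simp add: algebra_simps)
  have SS: "S \<noteq> 0" using S unfolding S_def .
  show ?thesis unfolding T0 T1 S_def[symmetric]
    apply (simp add: ds)
    apply (simp add: field_simps SS)
    unfolding S_def by algebra
qed

lemma alg_Q:
  fixes p a b c :: "real \<times> real"
  defines "x \<equiv> det2 a b" and "y \<equiv> det2 b c" and "z \<equiv> det2 a c"
  assumes nz: "x \<noteq> 0" "y \<noteq> 0" "z \<noteq> 0"
  shows "det2 (isect p (p+b) (p+b+c) (p+b+c-a) - isect (p-a) p (p+b) (p+b+c))
               (isect (p+b) (p+b+c) (p+b+c-a) (p+c-a) - isect p (p+b) (p+b+c) (p+b+c-a))
         = (x*y + y*z + z*x) / x"
proof -
  have sw: "det2 b a = - x" "det2 c a = - z" "det2 c b = - y"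
    unfolding x_def y_def z_def by (simp_all add: det2_swap[of b a] det2_swap[of c a] det2_swap[of c b])
  note ds = det2_lin sw x_def[symmetric] y_def[symmetric] z_def[symmetric]
  have d0: "det2 (p - (p-a)) ((p+b+c) - (p+b)) = z"
    by (simp add: ds algebra_simps)
  have n0: "det2 ((p+b) - (p-a)) ((p+b+c) - (p+b)) = y + z"
    by (simp add: ds algebra_simps)
  have d1: "det2 ((p+b) - p) ((p+b+c-a) - (p+b+c)) = x"
    by (simp add: ds algebra_simps)
  have n1: "det2 ((p+b+c) - p) ((p+b+c-a) - (p+b+c)) = x + z"
    by (simp add: ds algebra_simps)
  have d2: "det2 ((p+b+c) - (p+b)) ((p+c-a) - (p+b+c-a)) = y"
    by (simp add: ds algebra_simps)
  have n2: "det2 ((p+b+c-a) - (p+b)) ((p+c-a) - (p+b+c-a)) = x + y"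
    by (simp add: ds algebra_simps)
  have Q0: "isect (p-a) p (p+b) (p+b+c) = (p - a) + ((y+z)/z) *\<^sub>R a"
    using isect_eq[of p "p-a" "p+b+c" "p+b"] d0 n0 nz by (simp add: algebra_simps)
  have Q1: "isect p (p+b) (p+b+c) (p+b+c-a) = p + ((x+z)/x) *\<^sub>R b"
    using isect_eq[of "p+b" p "p+b+c-a" "p+b+c"] d1 n1 nz by (simp add: algebra_simps)
  have Q2: "isect (p+b) (p+b+c) (p+b+c-a) (p+c-a) = (p + b) + ((x+y)/y) *\<^sub>R c"
    using isect_eq[of "p+b+c" "p+b" "p+c-a" "p+b+c-a"] d2 n2 nz by (simp add: algebra_simps)
  have T0: "isect p (p+b) (p+b+c) (p+b+c-a) - isect (p-a) p (p+b) (p+b+c)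
      = (1 - (y+z)/z) *\<^sub>R a + ((x+z)/x) *\<^sub>R b"
    unfolding Q0 Q1 by (simp add: algebra_simps)
  have T1: "isect (p+b) (p+b+c) (p+b+c-a) (p+c-a) - isect p (p+b) (p+b+c) (p+b+c-a)
      = (1 - (x+z)/x) *\<^sub>R b + ((x+y)/y) *\<^sub>R c"
    unfolding Q1 Q2 by (simp add: algebra_simps)
  show ?thesis unfolding T0 T1
    apply (simp add: ds)
    by (simp add: field_simps nz)
qed



lemma shift_const:
  fixes f :: "int \<Rightarrow> 'a"
  assumes "\<And>k. f (k+1) = f k"
  shows "f k = f 0"
proof (induct k rule: int_induct[where k=0])
  case base then show ?case by simp
next
  case (step1 i) then show ?case using assms[of i] by simp
next
  case (step2 i) then show ?case using assms[of "i-1"] by simp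
qed

lemma pos_comb: "0 < (A::real) \<Longrightarrow> 0 < B \<Longrightarrow> 0 \<le> \<beta> \<Longrightarrow> \<beta> < 1 \<Longrightarrow> 0 < (1-\<beta>)*A + \<beta>*B"
proof -
  assume h: "0 < A" "0 < B" "0 \<le> \<beta>" "\<beta> < 1"
  have "(1-\<beta>)*A > 0" using h by simp
  moreover have "\<beta>*B \<ge> 0" using h by simp
  ultimately show ?thesis by linarith
qed

definition Dt :: "dcurve \<Rightarrow> int \<Rightarrow> real" where
  "Dt r k = det2 (tang r k) (tang r (k+1))"

definition phex :: "dcurve \<Rightarrow> real \<Rightarrow> bool" where
  "phex r \<sigma> \<longleftrightarrow> (\<sigma> = 1 \<or> \<sigma> = -1) \<and> (\<forall>k. r (k+6) = r k) \<and>
     (\<forall>k. tang r (k+3) = - tang r k) \<and> (\<forall>k. \<sigma> * Dt r k > 0)"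

lemma isect_reflect:
  assumes "det2 (p2 - p1) (p4 - p3) \<noteq> 0"
  shows "isect (C - p1) (C - p2) (C - p3) (C - p4) = C - isect p1 p2 p3 p4"
proof -
  have e: "det2 ((C - p2) - (C - p1)) ((C - p4) - (C - p3)) = det2 (p2 - p1) (p4 - p3)"
    by (simp add: det2_def algebra_simps)
  have e2: "det2 ((C - p3) - (C - p1)) ((C - p4) - (C - p3)) = det2 (p3 - p1) (p4 - p3)"
    by (simp add: det2_def algebra_simps)
  have "isect (C - p1) (C - p2) (C - p3) (C - p4) = (C - p1) + (det2 (p3 - p1) (p4 - p3) / det2 (p2 - p1) (p4 - p3)) *\<^sub>R ((C - p2) - (C - p1))"
    using isect_eq[of "C - p2" "C - p1" "C - p4" "C - p3"] assms e e2 by simp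
  then show ?thesis by (simp add: isect_eq[OF assms] algebra_simps)
qed

context
  fixes r :: dcurve and \<sigma> :: real
  assumes ph: "phex r \<sigma>"
begin

lemma sg: "\<sigma> = 1 \<or> \<sigma> = -1" using ph unfolding phex_def by blast
lemma per: "r (k+6) = r k" using ph unfolding phex_def by blast
lemma ap: "tang r (k+3) = - tang r k" using ph unfolding phex_def by blast
lemma pos: "\<sigma> * Dt r k > 0" using ph unfolding phex_def by blast
lemma Dnz: "Dt r k \<noteq> 0" using pos[of k] by auto

lemma per_m: "r (k + 6*m) = r k"
proof -
  have "(\<lambda>m. r (k + 6*m)) m = (\<lambda>m. r (k + 6*m)) 0"
    by (rule shift_const) (simp add: distrib_left add.assoc[symmetric] per)
  then show ?thesis by simp
qed

lemma rsucc: "r (k+1) = r k + tang r k" by (simp add: tang_def)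
lemma rpred: "r (k-1) = r k - tang r (k-1)" by (simp add: tang_def)

lemma t2: "tang r (k+2) = - tang r (k-1)"
  using ap[of "k-1"] by (simp add: algebra_simps)

lemma Dt3: "Dt r (k+3) = Dt r k"
  unfolding Dt_def using ap[of k] ap[of "k+1"] by (simp add: add.assoc det2_lin)

lemma detk2: "det2 (tang r k) (tang r (k+2)) = Dt r (k+2)"
  unfolding Dt_def using ap[of k] by (simp add: add.assoc det2_lin det2_swap[of "tang r (k+2)"])

lemma detm1: "det2 (tang r (k-1)) (tang r (k+1)) = Dt r (k+1)"
  using detk2[of "k-1"] by (simp add: algebra_simps)

lemma off2: "r (k+2) = r k + tang r k + tang r (k+1)"
  using rsucc[of k] rsucc[of "k+1"] by (simp add: add.assoc)
lemma off3: "r (k+3) = r k + tang r k + tang r (k+1) + tang r (k+2)"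
  using off2[of k] rsucc[of "k+2"] by (simp add: add.assoc)
lemma off4: "r (k+4) = r k + tang r (k+1) + tang r (k+2)"
  using off3[of k] rsucc[of "k+3"] ap[of k] by (simp add: add.assoc)
lemma off5: "r (k+5) = r k + tang r (k+2)"
  using off4[of k] rsucc[of "k+4"] ap[of "k+1"] by (simp add: add.assoc)

lemma Fpos:
  assumes "2 \<le> m" "m \<le> 5"
  shows "\<sigma> * det2 (tang r k) (r (k+m) - r k) > 0"
proof -
  have p0: "\<sigma> * Dt r k > 0" "\<sigma> * Dt r (k+2) > 0" using pos by auto
  have "m = 2 \<or> m = 3 \<or> m = 4 \<or> m = 5" using assms by arith
  then show ?thesis
  proof (elim disjE)
    assume "m = 2" then show ?thesis using p0 by (simp add: off2 det2_lin Dt_def[symmetric])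
  next
    assume "m = 3" then show ?thesis using p0
      by (simp add: off3 det2_lin Dt_def[symmetric] detk2 distrib_left)
  next
    assume "m = 4" then show ?thesis using p0
      by (simp add: off4 det2_lin Dt_def[symmetric] detk2 distrib_left)
  next
    assume "m = 5" then show ?thesis using p0
      by (simp add: off5 det2_lin Dt_def[symmetric] detk2 distrib_left)
  qed
qed

lemma F01: "det2 (tang r k) (r (k+0) - r k) = 0" "det2 (tang r k) (r (k+1) - r k) = 0"
  by (simp_all add: rsucc det2_lin)

lemma Fq:
  assumes "0 \<le> m" "m \<le> 5"
  shows "det2 (tang r k) (r (k + m + 6*q) - r k) = det2 (tang r k) (r (k+m) - r k)"
  using per_m[of "k+m" q] by simp

lemma tnz: "tang r k \<noteq> 0"
  using Dnz[of k] unfolding Dt_def by (auto simp: det2_lin)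

lemma simple: "simple_curve r 6"
  unfolding simple_curve_def
proof (intro allI inj_onI)
  fix k0 :: int and s t :: real
  assume hs: "s \<in> {real_of_int k0..<real_of_int k0 + real_of_int 6}"
    and ht: "t \<in> {real_of_int k0..<real_of_int k0 + real_of_int 6}"
    and eq: "pl_interp r s = pl_interp r t"
  define i where "i = \<lfloor>s\<rfloor>"
  define j where "j = \<lfloor>t\<rfloor>"
  define \<alpha> where "\<alpha> = s - of_int i"
  define \<beta> where "\<beta> = t - of_int j"
  have a01: "0 \<le> \<alpha>" "\<alpha> < 1" unfolding \<alpha>_def i_def
    using of_int_floor_le[of s] real_of_int_floor_add_one_gt[of s] by linarith+
  have b01: "0 \<le> \<beta>" "\<beta> < 1" unfolding \<beta>_def j_def
    using of_int_floor_le[of t] real_of_int_floor_add_one_gt[of t] by linarith+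
  have hi: "k0 \<le> i" "i < k0 + 6" unfolding i_def using hs by (auto simp: le_floor_iff floor_less_iff)
  have hj: "k0 \<le> j" "j < k0 + 6" unfolding j_def using ht by (auto simp: le_floor_iff floor_less_iff)
  have pls: "pl_interp r s = r i + \<alpha> *\<^sub>R tang r i"
    unfolding pl_interp_def tang_def i_def \<alpha>_def by simp
  have plt: "pl_interp r t = r j + \<beta> *\<^sub>R tang r j"
    unfolding pl_interp_def tang_def j_def \<beta>_def by simp
  define m where "m = (j - i) mod 6"
  define q where "q = (j - i) div 6"
  have jm: "j = i + m + 6*q" unfolding m_def q_def by simp
  have m05: "0 \<le> m" "m \<le> 5" unfolding m_def by auto
  have E0: "det2 (tang r i) (pl_interp r t - r i) = 0"
    unfolding eq[symmetric] pls by (simp add: det2_lin)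
  have dec: "pl_interp r t - r i = (1-\<beta>) *\<^sub>R (r j - r i) + \<beta> *\<^sub>R (r (j+1) - r i)"
    unfolding plt tang_def by (simp add: algebra_simps)
  have Ed: "(1-\<beta>) * det2 (tang r i) (r j - r i) + \<beta> * det2 (tang r i) (r (j+1) - r i) = 0"
    using E0 unfolding dec by (simp add: det2_lin)
  have Fj: "det2 (tang r i) (r j - r i) = det2 (tang r i) (r (i+m) - r i)"
    unfolding jm using Fq[OF m05] .
  have Fj1: "det2 (tang r i) (r (j+1) - r i) =
      (if m < 5 then det2 (tang r i) (r (i+(m+1)) - r i) else 0)"
  proof (cases "m < 5")
    case True
    have "j + 1 = i + (m+1) + 6*q" using jm by simp
    then have "r (j+1) = r (i + (m+1) + 6*q)" by (rule arg_cong)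
    then show ?thesis using Fq[of "m+1" i q] True m05 by simp
  next
    case False
    then have "m = 5" using m05 by simp
    then have "j + 1 = i + 0 + 6*(q+1)" using jm by (simp add: algebra_simps)
    then have "r (j+1) = r (i + 0 + 6*(q+1))" by (rule arg_cong)
    then show ?thesis using Fq[of 0 i "q+1"] F01[of i] False by simp
  qed
  have "m = 0 \<or> m = 1 \<or> m = 5 \<or> (2 \<le> m \<and> m \<le> 4)" using m05 by arith
  then show "s = t"
  proof (elim disjE)
    assume m0: "m = 0"
    then have "j = i" using jm hi hj by arith
    then have "(\<alpha> - \<beta>) *\<^sub>R tang r i = 0" using eq pls plt by (simp add: algebra_simps)
    then have "\<alpha> = \<beta>" using tnz[of i] by simp
    then show ?thesis using \<open>j = i\<close> unfolding \<alpha>_def \<beta>_def by simp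
  next
    assume m1: "m = 1"
    have "\<sigma> * det2 (tang r i) (r (i+2) - r i) > 0" using Fpos[of 2 i] by simp
    then have "\<beta> = 0" using Ed Fj Fj1 m1 F01[of i] by auto
    then have "pl_interp r t = r (i+1)" using plt jm m1 per_m[of "i+1" q] by (simp add: add.commute)
    then have "(1 - \<alpha>) *\<^sub>R tang r i = 0" using eq pls rsucc[of i] by (simp add: algebra_simps)
    then have "\<alpha> = 1" using tnz[of i] by simp
    then show ?thesis using a01 by simp
  next
    assume m5: "m = 5"
    have "\<sigma> * det2 (tang r i) (r (i+5) - r i) > 0" using Fpos[of 5 i] by simp
    then have "1 - \<beta> = 0" using Ed Fj Fj1 m5 by auto
    then show ?thesis using b01 by simp
  next
    assume m24: "2 \<le> m \<and> m \<le> 4"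
    have p1: "\<sigma> * det2 (tang r i) (r (i+m) - r i) > 0" using Fpos[of m i] m24 by simp
    have p2: "\<sigma> * det2 (tang r i) (r (i+(m+1)) - r i) > 0" using Fpos[of "m+1" i] m24 by simp
    have "\<sigma> * ((1-\<beta>) * det2 (tang r i) (r j - r i) + \<beta> * det2 (tang r i) (r (j+1) - r i)) > 0"
    proof -
      have "\<sigma> * ((1-\<beta>) * det2 (tang r i) (r j - r i) + \<beta> * det2 (tang r i) (r (j+1) - r i))
          = (1-\<beta>) * (\<sigma> * det2 (tang r i) (r (i+m) - r i)) + \<beta> * (\<sigma> * det2 (tang r i) (r (i+(m+1)) - r i))"
        using Fj Fj1 m24 by (simp add: algebra_simps)
      also have "\<dots> > 0" using pos_comb p1 p2 b01 by blast
      finally show ?thesis .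
    qed
    then show ?thesis using Ed by simp
  qed
qed

lemma Fnonneg: "\<sigma> * det2 (tang r k) (r j - r k) \<ge> 0"
proof -
  define m where "m = (j - k) mod 6"
  define q where "q = (j - k) div 6"
  have jm: "j = k + m + 6*q" unfolding m_def q_def by simp
  have m05: "0 \<le> m" "m \<le> 5" unfolding m_def by auto
  have e: "det2 (tang r k) (r j - r k) = det2 (tang r k) (r (k+m) - r k)"
    unfolding jm using Fq[OF m05] .
  show ?thesis
  proof (cases "m \<le> 1")
    case True
    then have "m = 0 \<or> m = 1" using m05 by arith
    then show ?thesis using e F01[of k] by auto
  next
    case False
    then show ?thesis using e Fpos[of m k] m05 by simp
  qed
qed

lemma phex_par: "par_hexagon r"
proof -
  have nd: "nondegenerate r" unfolding nondegenerate_def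
    using Dnz unfolding Dt_def by (metis diff_add_cancel)
  have cv: "convex_curve r" unfolding convex_curve_def
  proof
    fix k
    show "(\<forall>j. det2 (tang r k) (r j - r k) \<ge> 0) \<or> (\<forall>j. det2 (tang r k) (r j - r k) \<le> 0)"
      using sg
    proof
      assume "\<sigma> = 1" then show ?thesis using Fnonneg[of k] by simp
    next
      assume "\<sigma> = -1" then show ?thesis using Fnonneg[of k] by simp
    qed
  qed
  have cp: "closed_period r 6" unfolding closed_period_def
  proof (intro conjI allI impI)
    show "(0::int) < 6" by simp
    fix k show "r (k + 6) = r k" by (rule per)
  next
    fix p :: int assume p: "0 < p \<and> p < 6"
    show "\<not> (\<forall>k. r (k + p) = r k)"
    proof
      assume h: "\<forall>k. r (k + p) = r k"
      show False
      proof (cases "p = 1")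
        case True
        then have "tang r 0 = 0" using h[rule_format, of 0] unfolding tang_def by simp
        then show False using tnz by blast
      next
        case False
        then have "\<sigma> * det2 (tang r 0) (r (0+p) - r 0) > 0" using Fpos[of p 0] p by simp
        then show False using h[rule_format, of 0] by (simp add: det2_lin)
      qed
    qed
  qed
  show ?thesis unfolding par_hexagon_def
    using nd cv cp simple ap by blast
qed

end



definition Ssum :: "dcurve \<Rightarrow> real" where "Ssum r = Dt r 0 + Dt r 1 + Dt r 2"
definition Esum :: "dcurve \<Rightarrow> real" where "Esum r = Dt r 0 * Dt r 1 + Dt r 1 * Dt r 2 + Dt r 2 * Dt r 0"
definition Psum :: "dcurve \<Rightarrow> real" where "Psum r = Dt r 0 * Dt r 1 * Dt r 2"

lemma sign_lemma: "\<sigma> = 1 \<or> \<sigma> = -1 \<Longrightarrow> 0 < \<sigma> * x \<Longrightarrow> 0 < \<sigma> * y \<Longrightarrow> 0 < \<sigma> * (S::real) \<Longrightarrow> 0 < \<sigma> * (x * y / S)"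
  by (auto simp: zero_less_mult_iff zero_less_divide_iff)

lemma sign_lemma2: "\<sigma> = 1 \<or> \<sigma> = -1 \<Longrightarrow> 0 < (E::real) \<Longrightarrow> 0 < \<sigma> * x \<Longrightarrow> 0 < \<sigma> * (E / x)"
  by (auto simp: zero_less_mult_iff zero_less_divide_iff)

context
  fixes r :: dcurve and \<sigma> :: real
  assumes ph: "phex r \<sigma>"
begin

lemmas per' = per[OF ph] and ap' = ap[OF ph] and pos' = pos[OF ph] and sg' = sg[OF ph]
  and Dnz' = Dnz[OF ph] and Dt3' = Dt3[OF ph] and rsucc' = rsucc[OF ph] and rpred' = rpred[OF ph]
  and t2' = t2[OF ph] and off2' = off2[OF ph] and off3' = off3[OF ph] and off4' = off4[OF ph]
  and detm1' = detm1[OF ph]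

lemma Ssum_k: "Dt r (k-1) + Dt r k + Dt r (k+1) = Ssum r"
proof -
  have "(\<lambda>k. Dt r k + Dt r (k+1) + Dt r (k+2)) (k-1) = (\<lambda>k. Dt r k + Dt r (k+1) + Dt r (k+2)) 0"
    by (rule shift_const) (simp add: add.assoc Dt3'[of k for k, simplified add.assoc] algebra_simps)
  then show ?thesis by (simp add: Ssum_def algebra_simps)
qed

lemma Esum_k: "Dt r (k-1) * Dt r k + Dt r k * Dt r (k+1) + Dt r (k+1) * Dt r (k-1) = Esum r"
proof -
  let ?f = "\<lambda>k. Dt r k * Dt r (k+1) + Dt r (k+1) * Dt r (k+2) + Dt r (k+2) * Dt r k"
  have "\<And>k. ?f (k+1) = ?f k"
  proof -
    fix k
    have "Dt r (k+1+2) = Dt r k" using Dt3'[of k] by (simp add: add.assoc)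
    then show "?f (k+1) = ?f k" by (simp add: add.assoc algebra_simps)
  qed
  then have "?f (k-1) = ?f 0" by (rule shift_const)
  then show ?thesis by (simp add: Esum_def algebra_simps)
qed

lemma Psum_k: "Dt r k * Dt r (k+1) * Dt r (k+2) = Psum r"
proof -
  let ?f = "\<lambda>k. Dt r k * Dt r (k+1) * Dt r (k+2)"
  have "\<And>k. ?f (k+1) = ?f k"
  proof -
    fix k
    have "Dt r (k+1+2) = Dt r k" using Dt3'[of k] by (simp add: add.assoc)
    then show "?f (k+1) = ?f k" by (simp add: add.assoc algebra_simps)
  qed
  then have "?f k = ?f 0" by (rule shift_const)
  then show ?thesis by (simp add: Psum_def)
qed

lemma Spos: "\<sigma> * Ssum r > 0"
  using pos'[of 0] pos'[of 1] pos'[of 2] unfolding Ssum_def by (simp add: distrib_left)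

lemma Snz: "Ssum r \<noteq> 0" using Spos by auto

lemma Epos: "Esum r > 0"
proof -
  have "0 < Dt r 0 * Dt r 1" "0 < Dt r 1 * Dt r 2" "0 < Dt r 2 * Dt r 0"
    using pos'[of 0] pos'[of 1] pos'[of 2] sg' by (auto simp: zero_less_mult_iff)
  then show ?thesis unfolding Esum_def by simp
qed

lemma Pnz: "Psum r \<noteq> 0" unfolding Psum_def using Dnz' by simp

lemma cent: "r (k+3) = (r 0 + r 3) - r k"
proof -
  have "(\<lambda>k. r k + r (k+3)) k = (\<lambda>k. r k + r (k+3)) 0"
  proof (rule shift_const)
    fix k
    have "r (k + 1 + 3) = r (k+3) + tang r (k+3)" using rsucc'[of "k+3"] by (simp add: algebra_simps)
    then show "r (k + 1) + r (k + 1 + 3) = r k + r (k + 3)" using rsucc'[of k] ap'[of k]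
      by (simp add: algebra_simps)
  qed
  then show ?thesis by (simp add: algebra_simps)
qed

lemma idx: "k + 1 - 1 = k" "k + 1 + 1 = k + 2" "k + 1 + 2 = k + 3" "k + 2 - 1 = k + 1"
  "k + 2 + 1 = k + 3" "k + 2 + 2 = k + 4" for k :: int by simp_all

lemma pk0: "pent r k = isect (r k - tang r (k-1)) (r k + tang r k) (r k) (r k + tang r k + tang r (k+1))"
  unfolding pent_def by (simp add: rpred'[of k] rsucc'[of k] off2'[of k])
lemma pk1: "pent r (k+1) = isect (r k) (r k + tang r k + tang r (k+1)) (r k + tang r k)
    (r k + tang r k + tang r (k+1) - tang r (k-1))"
proof -
  have "pent r (k+1) = isect (r k) (r (k+2)) (r (k+1)) (r (k+3))"
    unfolding pent_def by (simp only: idx)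
  then show ?thesis by (simp add: rsucc'[of k] off2'[of k] off3'[of k] t2'[of k])
qed
lemma pk2: "pent r (k+2) = isect (r k + tang r k) (r k + tang r k + tang r (k+1) - tang r (k-1))
    (r k + tang r k + tang r (k+1)) (r k + tang r (k+1) - tang r (k-1))"
proof -
  have "pent r (k+2) = isect (r (k+1)) (r (k+3)) (r (k+2)) (r (k+4))"
    unfolding pent_def by (simp only: idx)
  then show ?thesis by (simp add: rsucc'[of k] off2'[of k] off3'[of k] off4'[of k] t2'[of k])
qed

lemma ik0: "invpent r k = isect (r k - tang r (k-1)) (r k) (r k + tang r k) (r k + tang r k + tang r (k+1))"
  unfolding invpent_def by (simp add: rpred'[of k] rsucc'[of k] off2'[of k])
lemma ik1: "invpent r (k+1) = isect (r k) (r k + tang r k) (r k + tang r k + tang r (k+1))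
    (r k + tang r k + tang r (k+1) - tang r (k-1))"
proof -
  have "invpent r (k+1) = isect (r k) (r (k+1)) (r (k+2)) (r (k+3))"
    unfolding invpent_def by (simp only: idx)
  then show ?thesis by (simp add: rsucc'[of k] off2'[of k] off3'[of k] t2'[of k])
qed
lemma ik2: "invpent r (k+2) = isect (r k + tang r k) (r k + tang r k + tang r (k+1))
    (r k + tang r k + tang r (k+1) - tang r (k-1)) (r k + tang r (k+1) - tang r (k-1))"
proof -
  have "invpent r (k+2) = isect (r (k+1)) (r (k+2)) (r (k+3)) (r (k+4))"
    unfolding invpent_def by (simp only: idx)
  then show ?thesis by (simp add: rsucc'[of k] off2'[of k] off3'[of k] off4'[of k] t2'[of k])
qed

lemma xyz: "det2 (tang r (k-1)) (tang r k) = Dt r (k-1)" "det2 (tang r k) (tang r (k+1)) = Dt r k"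
  "det2 (tang r (k-1)) (tang r (k+1)) = Dt r (k+1)"
  by (simp_all add: Dt_def detm1')

lemma PD: "Dt (pent r) k = Dt r k * Dt r (k+1) / Ssum r"
proof -
  have "Dt (pent r) k = det2 (pent r (k+1) - pent r k) (pent r (k+2) - pent r (k+1))"
    by (simp add: Dt_def tang_def add.assoc)
  also have "\<dots> = Dt r k * Dt r (k+1) / (Dt r (k-1) + Dt r k + Dt r (k+1))"
    unfolding pk1 pk2 unfolding pk0 using alg_P[of "tang r (k-1)" "tang r k" "tang r (k+1)" "r k"]
      Snz Ssum_k[of k] by (simp add: xyz)
  finally show ?thesis using Ssum_k[of k] by simp
qed

lemma QD: "Dt (invpent r) k = Esum r / Dt r (k-1)"
proof -
  have "Dt (invpent r) k = det2 (invpent r (k+1) - invpent r k) (invpent r (k+2) - invpent r (k+1))"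
    by (simp add: Dt_def tang_def add.assoc)
  also have "\<dots> = (Dt r (k-1) * Dt r k + Dt r k * Dt r (k+1) + Dt r (k+1) * Dt r (k-1)) / Dt r (k-1)"
    unfolding ik1 ik2 unfolding ik0 using alg_Q[of "tang r (k-1)" "tang r k" "tang r (k+1)" "r k"]
      Dnz' by (simp add: xyz)
  finally show ?thesis using Esum_k[of k] by simp
qed

lemma pden: "det2 (r (k+1) - r (k-1)) (r (k+2) - r k) = Ssum r"
proof -
  have e1: "r (k+1) - r (k-1) = tang r (k-1) + tang r k" by (simp add: rpred'[of k] rsucc'[of k])
  have e2: "r (k+2) - r k = tang r k + tang r (k+1)" by (simp add: off2'[of k])
  show ?thesis unfolding e1 e2 using Ssum_k[of k] by (simp add: det2_lin xyz)
qed

lemma iden: "det2 (r k - r (k-1)) (r (k+2) - r (k+1)) = Dt r (k+1)"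
proof -
  have e1: "r k - r (k-1) = tang r (k-1)" by (simp add: rpred'[of k])
  have e2: "r (k+2) - r (k+1) = tang r (k+1)" by (simp add: off2'[of k] rsucc'[of k])
  show ?thesis unfolding e1 e2 by (simp add: xyz)
qed

lemma pent_wd': "pent_wd r"
  unfolding pent_wd_def using isect_formula pden Snz by metis

lemma invpent_wd': "invpent_wd r"
  unfolding invpent_wd_def using isect_formula iden Dnz' by metis

lemma idx6: "k + 6 - 1 = k - 1 + 6" "k + 6 + 1 = k + 1 + 6" "k + 6 + 2 = k + 2 + 6"
  "k + 3 - 1 = k - 1 + 3" "k + 3 + 1 = k + 1 + 3" "k + 3 + 2 = k + 2 + 3" for k :: int by simp_all

lemma pent_per: "pent r (k+6) = pent r k"
proof -
  have "pent r (k+6) = isect (r (k-1+6)) (r (k+1+6)) (r (k+6)) (r (k+2+6))"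
    unfolding pent_def by (simp only: idx6)
  then show ?thesis by (simp only: per' pent_def)
qed

lemma invpent_per: "invpent r (k+6) = invpent r k"
proof -
  have "invpent r (k+6) = isect (r (k-1+6)) (r (k+6)) (r (k+1+6)) (r (k+2+6))"
    unfolding invpent_def by (simp only: idx6)
  then show ?thesis by (simp only: per' invpent_def)
qed

lemma pent_refl: "pent r (k+3) = (r 0 + r 3) - pent r k"
proof -
  have "pent r (k+3) = isect (r (k-1+3)) (r (k+1+3)) (r (k+3)) (r (k+2+3))"
    unfolding pent_def by (simp only: idx6)
  also have "\<dots> = isect ((r 0 + r 3) - r (k-1)) ((r 0 + r 3) - r (k+1)) ((r 0 + r 3) - r k) ((r 0 + r 3) - r (k+2))"
    by (simp only: cent)
  also have "\<dots> = (r 0 + r 3) - pent r k"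
    unfolding pent_def by (rule isect_reflect) (simp add: pden Snz)
  finally show ?thesis .
qed

lemma invpent_refl: "invpent r (k+3) = (r 0 + r 3) - invpent r k"
proof -
  have "invpent r (k+3) = isect (r (k-1+3)) (r (k+3)) (r (k+1+3)) (r (k+2+3))"
    unfolding invpent_def by (simp only: idx6)
  also have "\<dots> = isect ((r 0 + r 3) - r (k-1)) ((r 0 + r 3) - r k) ((r 0 + r 3) - r (k+1)) ((r 0 + r 3) - r (k+2))"
    by (simp only: cent)
  also have "\<dots> = (r 0 + r 3) - invpent r k"
    unfolding invpent_def by (rule isect_reflect) (simp add: iden Dnz')
  finally show ?thesis .
qed

lemma phex_pent: "phex (pent r) \<sigma>"
  unfolding phex_def
proof (intro conjI allI)
  show "\<sigma> = 1 \<or> \<sigma> = -1" by (rule sg')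
  fix k
  show "pent r (k+6) = pent r k" by (rule pent_per)
next
  fix k
  have e: "pent r (k+3+1) = (r 0 + r 3) - pent r (k+1)"
  proof -
    have "k+3+1 = (k+1)+3" by simp
    then show ?thesis using pent_refl[of "k+1"] by metis
  qed
  show "tang (pent r) (k+3) = - tang (pent r) k"
    unfolding tang_def e pent_refl[of k] by (simp add: algebra_simps)
next
  fix k
  show "0 < \<sigma> * Dt (pent r) k" unfolding PD
    by (rule sign_lemma[OF sg' pos' pos' Spos])
qed

lemma phex_invpent: "phex (invpent r) \<sigma>"
  unfolding phex_def
proof (intro conjI allI)
  show "\<sigma> = 1 \<or> \<sigma> = -1" by (rule sg')
  fix k
  show "invpent r (k+6) = invpent r k" by (rule invpent_per)
next
  fix k
  have e: "invpent r (k+3+1) = (r 0 + r 3) - invpent r (k+1)"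
  proof -
    have "k+3+1 = (k+1)+3" by simp
    then show ?thesis using invpent_refl[of "k+1"] by metis
  qed
  show "tang (invpent r) (k+3) = - tang (invpent r) k"
    unfolding tang_def e invpent_refl[of k] by (simp add: algebra_simps)
next
  fix k
  show "0 < \<sigma> * Dt (invpent r) k" unfolding QD
    by (rule sign_lemma2[OF sg' Epos pos'])
qed

lemma kap: "kappa r k = Dt r k / Dt r (k-1)" "kappabar r k = Dt r (k+1) / Dt r (k-1)"
  unfolding kappa_def kappabar_def by (simp_all add: xyz)

end

lemma curv_shift:
  assumes "phex r \<sigma>" "phex r' \<sigma>'" "\<mu> \<noteq> 0" "\<And>n. Dt r' n = \<mu> * Dt r (n+1)"
  shows "kappa r' n = kappa r (n+1) \<and> kappabar r' n = kappabar r (n+1)"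
proof -
  have a: "Dt r' n = \<mu> * Dt r (n+1)" "Dt r' (n-1) = \<mu> * Dt r n" "Dt r' (n+1) = \<mu> * Dt r (n+2)"
    using assms(4)[of n] assms(4)[of "n-1"] assms(4)[of "n+1"] by (simp_all add: add.assoc)
  show ?thesis
    unfolding kap[OF assms(1)] kap[OF assms(2)] a using assms(3) by (simp add: add.assoc)
qed

lemma par_phex:
  assumes "par_hexagon r"
  shows "\<exists>\<sigma>. phex r \<sigma>"
proof -
  have nd: "\<And>k. det2 (tang r (k-1)) (tang r k) \<noteq> 0" and cv: "convex_curve r"
    and cp: "closed_period r 6" and ap: "\<And>k. tang r (k+3) = - tang r k"
    using assms unfolding par_hexagon_def nondegenerate_def by blast+
  have per: "\<And>k. r (k+6) = r k" using cp unfolding closed_period_def by blast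
  have Dnz: "Dt r k \<noteq> 0" for k using nd[of "k+1"] unfolding Dt_def by simp
  have step: "(Dt r (k+1) > 0) = (Dt r k > 0)" for k
  proof -
    have c: "(\<forall>j. det2 (tang r (k+1)) (r j - r (k+1)) \<ge> 0) \<or> (\<forall>j. det2 (tang r (k+1)) (r j - r (k+1)) \<le> 0)"
      using cv unfolding convex_curve_def by blast
    have e1: "det2 (tang r (k+1)) (r (k+3) - r (k+1)) = Dt r (k+1)"
    proof -
      have "r (k+3) - r (k+1) = tang r (k+1) + tang r (k+2)" unfolding tang_def by (simp add: algebra_simps)
      then show ?thesis unfolding Dt_def by (simp add: det2_lin add.assoc)
    qed
    have e2: "det2 (tang r (k+1)) (r k - r (k+1)) = Dt r k"
    proof -
      have "r k - r (k+1) = - tang r k" unfolding tang_def by simp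
      then show ?thesis unfolding Dt_def by (simp add: det2_lin det2_swap[of "tang r (k+1)"])
    qed
    show ?thesis using c e1 e2 Dnz[of k] Dnz[of "k+1"]
      by (smt (verit))
  qed
  define \<sigma> :: real where "\<sigma> = (if Dt r 0 > 0 then 1 else -1)"
  have h: "(\<lambda>k. Dt r k > 0) k = (\<lambda>k. Dt r k > 0) 0" for k by (rule shift_const) (simp add: step)
  have "\<sigma> * Dt r k > 0" for k
  proof (cases "Dt r 0 > 0")
    case True
    then show ?thesis using h[of k] unfolding \<sigma>_def by simp
  next
    case False
    then have "\<not> Dt r k > 0" using h[of k] by simp
    then have "Dt r k < 0" using Dnz[of k] by linarith
    then show ?thesis using False unfolding \<sigma>_def by simp
  qed
  then have "phex r \<sigma>" unfolding phex_def \<sigma>_def using per ap by auto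
  then show ?thesis by blast
qed



theorem proposition7p12:
  fixes r :: dcurve
  assumes "par_hexagon r"
  shows "pent_wd r \<and> pent_wd (pent r) \<and> par_hexagon (pent r) \<and> par_hexagon (pent (pent r)) \<and>
         invpent_wd r \<and> invpent_wd (invpent r) \<and> par_hexagon (invpent r) \<and> par_hexagon (invpent (invpent r)) \<and>
         (\<exists>s::int. \<forall>n. kappa (pent (pent r)) n = kappa r (n + s) \<and> kappabar (pent (pent r)) n = kappabar r (n + s)) \<and>
         (\<exists>s'::int. \<forall>n. kappa (invpent (invpent r)) n = kappa r (n + s') \<and> kappabar (invpent (invpent r)) n = kappabar r (n + s'))"
proof -
  obtain \<sigma> where ph: "phex r \<sigma>" using par_phex[OF assms] by blast
  have p1: "phex (pent r) \<sigma>" by (rule phex_pent[OF ph])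
  have p2: "phex (pent (pent r)) \<sigma>" by (rule phex_pent[OF p1])
  have q1: "phex (invpent r) \<sigma>" by (rule phex_invpent[OF ph])
  have q2: "phex (invpent (invpent r)) \<sigma>" by (rule phex_invpent[OF q1])
  define \<mu> where "\<mu> = Psum r / (Ssum r * Ssum r * Ssum (pent r))"
  have \<mu>nz: "\<mu> \<noteq> 0" unfolding \<mu>_def using Pnz[OF ph] Snz[OF ph] Snz[OF p1] by simp
  have PP: "Dt (pent (pent r)) n = \<mu> * Dt r (n+1)" for n
  proof -
    have "Dt (pent (pent r)) n = (Dt r n * Dt r (n+1) / Ssum r) * (Dt r (n+1) * Dt r (n+1+1) / Ssum r) / Ssum (pent r)"
      unfolding PD[OF p1] PD[OF ph] ..
    also have "\<dots> = Dt r (n+1) * ((Dt r n * Dt r (n+1) * Dt r (n+2)) / (Ssum r * Ssum r * Ssum (pent r)))"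
      by (simp add: add.assoc)
    also have "\<dots> = \<mu> * Dt r (n+1)" unfolding Psum_k[OF ph] \<mu>_def by simp
    finally show ?thesis .
  qed
  define \<nu> where "\<nu> = Esum (invpent r) / Esum r"
  have \<nu>nz: "\<nu> \<noteq> 0" unfolding \<nu>_def using Epos[OF ph] Epos[OF q1] by simp
  have QQ: "Dt (invpent (invpent r)) n = \<nu> * Dt r (n+1)" for n
  proof -
    have d3: "Dt r (n-1-1) = Dt r (n+1)" using Dt3[OF ph, of "n-2"] by (simp add: add.commute)
    have "Dt (invpent (invpent r)) n = Esum (invpent r) / (Esum r / Dt r (n-1-1))"
      unfolding QD[OF q1] QD[OF ph] ..
    also have "\<dots> = \<nu> * Dt r (n+1)" unfolding d3 \<nu>_def using Epos[OF ph] by simp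
    finally show ?thesis .
  qed
  have k1: "\<forall>n. kappa (pent (pent r)) n = kappa r (n + 1) \<and> kappabar (pent (pent r)) n = kappabar r (n + 1)"
    using curv_shift[OF ph p2 \<mu>nz PP] by blast
  have k2: "\<forall>n. kappa (invpent (invpent r)) n = kappa r (n + 1) \<and> kappabar (invpent (invpent r)) n = kappabar r (n + 1)"
    using curv_shift[OF ph q2 \<nu>nz QQ] by blast
  show ?thesis
    using pent_wd'[OF ph] pent_wd'[OF p1] phex_par[OF p1] phex_par[OF p2]
      invpent_wd'[OF ph] invpent_wd'[OF q1] phex_par[OF q1] phex_par[OF q2] k1 k2 by blast
qed


end
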